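(* Let $S$ be a simplicial poset, $\mu\colon E(S)\to\mathbb{Z}_+$ an edge multiplicity function, $I\in S$, and $c_I\colon E(I)\to\mathbb{Z}_+$ with $c_I(e)\in\{1,\dots,\mu(e)\}$. Then \[ \mathrm{lk}_{S_\mu}(I,c_I)\cong(\mathrm{lk}_S I)_{\tilde\mu,\tilde\nu}, \] where $\tilde\mu=\mu\circ\mathrm{rest}\colon E(\mathrm{lk}_S I)\to\mathbb{Z}_+$, and $\tilde\nu\colon V(\mathrm{lk}_S I)\to\mathbb{Z}_+$ is given by $\tilde\nu(J)=\prod_{e\in E(J)\setminus E(I)}\mu(e)$ for each $J>I$ with $\dim J=\dim I+1$.
   Context: A finite poset $S$ is a simplicial poset if for every $I\in S$ the lower set $S_{\leqslant I}$ is isomorphic to the poset of nonempty faces of a $k$-simplex; $k=\dim I$. $V(X)$, $E(X)$ denote the sets of vertices (dimension 0) and edges (dimension 1) of $X$ or below $X$; every subset of $V(J)$ is the vertex set of a unique element $\leqslant J$. $\mathrm{lk}_S I=S_{>I}$, a simplicial poset whose vertices are the $J>I$ with $\dim J=\dim I+1$ and whose edges are the $J>I$ with $\dim J=\dim I+2$. The map $\mathrm{rest}\colon E(\mathrm{lk}_SI)\to E(S)$ sends such $J$ to the unique edge of $S$ below $J$ with vertex set $V(J)\setminus V(I)$. Edge inflation: $S_\mu$ is the poset of pairs $(I,c_I)$, $c_I\colon E(I)\to\mathbb{Z}_+$, $c_I(e)\in\{1,\dots,\mu(e)\}$, ordered by $(I,c_I)<(J,c_J)$ iff $I<J$ and $c_I=c_J|_{E(I)}$.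 For a simplicial poset $L$ with edge function $\mu\colon E(L)\to\mathbb{Z}_+$ and vertex function $\nu\colon V(L)\to\mathbb{Z}_+$, $L_{\mu,\nu}$ is the poset of triples $(J,d_J,c_J)$ with $J\in L$, $d_J\colon V(J)\to\mathbb{Z}_+$, $d_J(v)\in\{1,\dots,\nu(v)\}$, $c_J\colon E(J)\to\mathbb{Z}_+$, $c_J(e)\in\{1,\dots,\mu(e)\}$, ordered by $(J,d_J,c_J)\leqslant(J',d_{J'},c_{J'})$ iff $J\leqslant J'$, $d_{J'}|_{V(J)}=d_J$ and $c_{J'}|_{E(J)}=c_J$. *)

theory Defs
  imports Main
begin

definition partial_order_on' :: "'a set \<Rightarrow> ('a \<Rightarrow> 'a \<Rightarrow> bool) \<Rightarrow> bool" where
  "partial_order_on' P le \<longleftrightarrow>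
     (\<forall>x\<in>P. le x x) \<and>
     (\<forall>x\<in>P. \<forall>y\<in>P. le x y \<and> le y x \<longrightarrow> x = y) \<and>
     (\<forall>x\<in>P. \<forall>y\<in>P. \<forall>z\<in>P. le x y \<and> le y z \<longrightarrow> le x z)"

definition poset_iso ::
  "'a set \<Rightarrow> ('a \<Rightarrow> 'a \<Rightarrow> bool) \<Rightarrow> 'b set \<Rightarrow> ('b \<Rightarrow> 'b \<Rightarrow> bool) \<Rightarrow> bool" where
  "poset_iso P le Q le' \<longleftrightarrow>
     (\<exists>f. bij_betw f P Q \<and> (\<forall>x\<in>P. \<forall>y\<in>P. le x y \<longleftrightarrow> le' (f x) (f y)))"

definition lower_set :: "'a set \<Rightarrow> ('a \<Rightarrow> 'a \<Rightarrow> bool) \<Rightarrow> 'a \<Rightarrow> 'a set" where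
  "lower_set P le I = {J \<in> P. le J I}"

definition simplex_faces :: "nat \<Rightarrow> nat set set" where
  "simplex_faces k = {B. B \<subseteq> {0..k} \<and> B \<noteq> {}}"

definition simplicial_poset :: "'a set \<Rightarrow> ('a \<Rightarrow> 'a \<Rightarrow> bool) \<Rightarrow> bool" where
  "simplicial_poset P le \<longleftrightarrow> finite P \<and> partial_order_on' P le \<and>
     (\<forall>I\<in>P. \<exists>k. poset_iso (lower_set P le I) le (simplex_faces k) (\<subseteq>))"

definition vertices :: "'a set \<Rightarrow> ('a \<Rightarrow> 'a \<Rightarrow> bool) \<Rightarrow> 'a set" where
  "vertices P le = {v \<in> P. \<forall>u\<in>P. le u v \<longrightarrow> u = v}"

definition Vb :: "'a set \<Rightarrow> ('a \<Rightarrow> 'a \<Rightarrow> bool) \<Rightarrow> 'a \<Rightarrow> 'a set" where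
  "Vb P le X = {v \<in> vertices P le. le v X}"

definition dimp :: "'a set \<Rightarrow> ('a \<Rightarrow> 'a \<Rightarrow> bool) \<Rightarrow> 'a \<Rightarrow> nat" where
  "dimp P le X = card (Vb P le X) - 1"

definition edges :: "'a set \<Rightarrow> ('a \<Rightarrow> 'a \<Rightarrow> bool) \<Rightarrow> 'a set" where
  "edges P le = {e \<in> P. card (Vb P le e) = 2}"

definition Eb :: "'a set \<Rightarrow> ('a \<Rightarrow> 'a \<Rightarrow> bool) \<Rightarrow> 'a \<Rightarrow> 'a set" where
  "Eb P le X = {e \<in> edges P le. le e X}"

definition link :: "'a set \<Rightarrow> ('a \<Rightarrow> 'a \<Rightarrow> bool) \<Rightarrow> 'a \<Rightarrow> 'a set" where
  "link P le I = {J \<in> P. le I J \<and> J \<noteq> I}"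

definition rest :: "'a set \<Rightarrow> ('a \<Rightarrow> 'a \<Rightarrow> bool) \<Rightarrow> 'a \<Rightarrow> 'a \<Rightarrow> 'a" where
  "rest P le I J = (THE e. e \<in> edges P le \<and> le e J \<and> Vb P le e = Vb P le J - Vb P le I)"

text \<open>Edge inflation S_mu. Labelings c_I : E(I) -> Z_+ are represented extensionally
  (value 0 outside E(I)).\<close>
definition inflation :: "'a set \<Rightarrow> ('a \<Rightarrow> 'a \<Rightarrow> bool) \<Rightarrow> ('a \<Rightarrow> nat) \<Rightarrow> ('a \<times> ('a \<Rightarrow> nat)) set" where
  "inflation P le \<mu> = {(I, c). I \<in> P \<and>
      (\<forall>e \<in> Eb P le I. 1 \<le> c e \<and> c e \<le> \<mu> e) \<and> (\<forall>e. e \<notin> Eb P le I \<longrightarrow> c e = 0)}"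

definition inflation_le :: "'a set \<Rightarrow> ('a \<Rightarrow> 'a \<Rightarrow> bool) \<Rightarrow>
    ('a \<times> ('a \<Rightarrow> nat)) \<Rightarrow> ('a \<times> ('a \<Rightarrow> nat)) \<Rightarrow> bool" where
  "inflation_le P le x y \<longleftrightarrow> le (fst x) (fst y) \<and>
      snd x = (\<lambda>e. if e \<in> Eb P le (fst x) then snd y e else 0)"

definition inflation2 :: "'a set \<Rightarrow> ('a \<Rightarrow> 'a \<Rightarrow> bool) \<Rightarrow> ('a \<Rightarrow> nat) \<Rightarrow> ('a \<Rightarrow> nat) \<Rightarrow>
    ('a \<times> ('a \<Rightarrow> nat) \<times> ('a \<Rightarrow> nat)) set" where
  "inflation2 L le \<mu> \<nu> = {(J, d, c). J \<in> L \<and>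
      (\<forall>v \<in> Vb L le J. 1 \<le> d v \<and> d v \<le> \<nu> v) \<and> (\<forall>v. v \<notin> Vb L le J \<longrightarrow> d v = 0) \<and>
      (\<forall>e \<in> Eb L le J. 1 \<le> c e \<and> c e \<le> \<mu> e) \<and> (\<forall>e. e \<notin> Eb L le J \<longrightarrow> c e = 0)}"

definition inflation2_le :: "'a set \<Rightarrow> ('a \<Rightarrow> 'a \<Rightarrow> bool) \<Rightarrow>
    ('a \<times> ('a \<Rightarrow> nat) \<times> ('a \<Rightarrow> nat)) \<Rightarrow> ('a \<times> ('a \<Rightarrow> nat) \<times> ('a \<Rightarrow> nat)) \<Rightarrow> bool" where
  "inflation2_le L le x y \<longleftrightarrow>
     (case x of (J, d, c) \<Rightarrow> case y of (J', d', c') \<Rightarrow>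
        le J J' \<and> d = (\<lambda>v. if v \<in> Vb L le J then d' v else 0) \<and>
        c = (\<lambda>e. if e \<in> Eb L le J then c' e else 0))"

end

theory Submission imports Defs "HOL-Library.FuncSet"
begin

lemma card_F:
  assumes "finite A"
  shows "finite {f. (\<forall>e\<in>A. 1 \<le> f e \<and> f e \<le> \<mu> e) \<and> (\<forall>e. e \<notin> A \<longrightarrow> f e = (0::nat))}
    \<and> card {f. (\<forall>e\<in>A. 1 \<le> f e \<and> f e \<le> \<mu> e) \<and> (\<forall>e. e \<notin> A \<longrightarrow> f e = (0::nat))} = (\<Prod>e\<in>A. \<mu> e)"
proof -
  define F where "F = {f. (\<forall>e\<in>A. 1 \<le> f e \<and> f e \<le> \<mu> e) \<and> (\<forall>e. e \<notin> A \<longrightarrow> f e = (0::nat))}"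
  have b: "bij_betw (\<lambda>f. restrict f A) F (PiE A (\<lambda>e. {1..\<mu> e}))"
  proof (rule bij_betw_byWitness[where f'="\<lambda>g e. if e \<in> A then g e else 0"])
    show "\<forall>a\<in>F. (\<lambda>e. if e \<in> A then restrict a A e else 0) = a"
      by (auto simp: F_def fun_eq_iff)
    show "\<forall>a'\<in>PiE A (\<lambda>e. {1..\<mu> e}). restrict (\<lambda>e. if e \<in> A then a' e else 0) A = a'"
      by (auto simp: fun_eq_iff PiE_def extensional_def)
    show "(\<lambda>f. restrict f A) ` F \<subseteq> PiE A (\<lambda>e. {1..\<mu> e})"
      by (auto simp: F_def)
    show "(\<lambda>g e. if e \<in> A then g e else 0) ` PiE A (\<lambda>e. {1..\<mu> e}) \<subseteq> F"
      by (auto simp: F_def PiE_def Pi_def)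
  qed
  have "finite (PiE A (\<lambda>e. {1..\<mu> e}))" using assms by (simp add: finite_PiE)
  then have "finite F" using b bij_betw_finite by blast
  moreover have "card F = (\<Prod>e\<in>A. \<mu> e)" using bij_betw_same_card[OF b] card_PiE[OF assms, of "\<lambda>e. {1..\<mu> e}"] by simp
  ultimately show ?thesis unfolding F_def by blast
qed

locale sp =
  fixes P :: "'a set" and le :: "'a \<Rightarrow> 'a \<Rightarrow> bool"
  assumes sp: "simplicial_poset P le"
begin

lemma fin: "finite P"
  and reflP: "x \<in> P \<Longrightarrow> le x x"
  and antisymP: "x\<in>P \<Longrightarrow> y\<in>P \<Longrightarrow> le x y \<Longrightarrow> le y x \<Longrightarrow> x = y"
  and transP: "x\<in>P \<Longrightarrow> y\<in>P \<Longrightarrow> z\<in>P \<Longrightarrow> le x y \<Longrightarrow> le y z \<Longrightarrow> le x z"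
  using sp unfolding simplicial_poset_def partial_order_on'_def by blast+

lemma Vb_sub: "Vb P le X \<subseteq> P" by (auto simp: Vb_def vertices_def)
lemma finV: "finite (Vb P le X)" using fin Vb_sub finite_subset by blast

lemma Vb_mono: "X \<in> P \<Longrightarrow> Y \<in> P \<Longrightarrow> le X Y \<Longrightarrow> Vb P le X \<subseteq> Vb P le Y"
  unfolding Vb_def vertices_def using transP by blast

lemma key:
  assumes J: "J \<in> P"
  shows "(\<forall>X\<in>P. \<forall>Y\<in>P. le X J \<longrightarrow> le Y J \<longrightarrow> (le X Y \<longleftrightarrow> Vb P le X \<subseteq> Vb P le Y))
       \<and> (\<forall>A. A \<subseteq> Vb P le J \<longrightarrow> A \<noteq> {} \<longrightarrow> (\<exists>X\<in>P. le X J \<and> Vb P le X = A))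
       \<and> Vb P le J \<noteq> {}"
proof -
  obtain k f where bij: "bij_betw f (lower_set P le J) (simplex_faces k)" and
    ord: "\<forall>x\<in>lower_set P le J. \<forall>y\<in>lower_set P le J. le x y \<longleftrightarrow> f x \<subseteq> f y"
    using sp J unfolding simplicial_poset_def poset_iso_def by blast
  define D where "D = lower_set P le J"
  have D: "X \<in> D \<longleftrightarrow> X \<in> P \<and> le X J" for X by (simp add: D_def lower_set_def)
  have fD: "X \<in> D \<Longrightarrow> f X \<subseteq> {0..k} \<and> f X \<noteq> {}" for X
    using bij unfolding bij_betw_def simplex_faces_def D_def by blast
  have surjf: "B \<subseteq> {0..k} \<Longrightarrow> B \<noteq> {} \<Longrightarrow> \<exists>X\<in>D. f X = B" for B
  proof -
    assume "B \<subseteq> {0..k}" "B \<noteq> {}"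
    then have "B \<in> f ` D" using bij unfolding bij_betw_def simplex_faces_def D_def by blast
    then show ?thesis by blast
  qed
  have injf: "X\<in>D \<Longrightarrow> Y\<in>D \<Longrightarrow> f X = f Y \<Longrightarrow> X = Y" for X Y
    using bij unfolding bij_betw_def inj_on_def D_def by blast
  have ordD: "X\<in>D \<Longrightarrow> Y\<in>D \<Longrightarrow> le X Y \<longleftrightarrow> f X \<subseteq> f Y" for X Y using ord D_def by blast
  have vert: "v \<in> vertices P le \<longleftrightarrow> (\<exists>i. f v = {i})" if v: "v \<in> D" for v
  proof
    assume v2: "v \<in> vertices P le"
    obtain i where i: "i \<in> f v" using fD[OF v] by blast
    then have "{i} \<subseteq> {0..k}" using fD[OF v] by auto
    then obtain u where u: "u \<in> D" "f u = {i}" using surjf by blast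
    then have "le u v" using ordD[OF u(1) v] i by auto
    then have "u = v" using v2 u(1) D unfolding vertices_def by blast
    then show "\<exists>i. f v = {i}" using u by blast
  next
    assume "\<exists>i. f v = {i}"
    then obtain i where i: "f v = {i}" by blast
    show "v \<in> vertices P le" unfolding vertices_def
    proof (safe)
      show "v \<in> P" using v D by blast
      fix u assume u: "u \<in> P" "le u v"
      then have uD: "u \<in> D" using D v transP J by blast
      then have "f u \<subseteq> {i}" using ordD[OF uD v] u i by auto
      then have "f u = f v" using fD[OF uD] i by auto
      then show "u = v" using injf uD v by blast
    qed
  qed
  have union: "f X = \<Union> (f ` Vb P le X)" if X: "X \<in> D" for X
  proof
    show "f X \<subseteq> \<Union> (f ` Vb P le X)"
    proof
      fix i assume i: "i \<in> f X"
      then have "{i} \<subseteq> {0..k}" using fD[OF X] by auto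
      then obtain u where u: "u \<in> D" "f u = {i}" using surjf by blast
      then have "u \<in> vertices P le" using vert by blast
      moreover have "le u X" using ordD[OF u(1) X] u i by auto
      ultimately show "i \<in> \<Union> (f ` Vb P le X)" using u unfolding Vb_def by blast
    qed
    show "\<Union> (f ` Vb P le X) \<subseteq> f X"
    proof
      fix i assume "i \<in> \<Union> (f ` Vb P le X)"
      then obtain v where v: "v \<in> Vb P le X" "i \<in> f v" by blast
      then have "v \<in> P" "le v X" unfolding Vb_def vertices_def by auto
      then have vD: "v \<in> D" using X D transP J by blast
      show "i \<in> f X" using ordD[OF vD X] v \<open>le v X\<close> by blast
    qed
  qed
  have VD: "v \<in> Vb P le X \<Longrightarrow> X \<in> D \<Longrightarrow> v \<in> D" for v X
    unfolding Vb_def vertices_def using D transP J by blast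
  have JD: "J \<in> D" using J reflP D by blast
  show ?thesis
  proof (intro conjI ballI allI impI)
    fix X Y assume XY: "X \<in> P" "Y \<in> P" "le X J" "le Y J"
    then have XD: "X \<in> D" and YD: "Y \<in> D" using D by auto
    show "le X Y \<longleftrightarrow> Vb P le X \<subseteq> Vb P le Y"
    proof
      assume "le X Y" then show "Vb P le X \<subseteq> Vb P le Y" using Vb_mono XY by blast
    next
      assume "Vb P le X \<subseteq> Vb P le Y"
      then have "f X \<subseteq> f Y" using union[OF XD] union[OF YD] by blast
      then show "le X Y" using ordD[OF XD YD] by blast
    qed
  next
    fix A assume A: "A \<subseteq> Vb P le J" "A \<noteq> {}"
    have AD: "A \<subseteq> D" using A VD JD by blast
    define B where "B = \<Union> (f ` A)"
    have "B \<subseteq> {0..k}" using AD fD unfolding B_def by blast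
    moreover have "B \<noteq> {}"
    proof -
      obtain a where "a \<in> A" using A by blast
      then have "f a \<noteq> {}" "f a \<subseteq> B" using AD fD unfolding B_def by blast+
      then show ?thesis by blast
    qed
    ultimately obtain X where X: "X \<in> D" "f X = B" using surjf by blast
    have "Vb P le X = A"
    proof
      show "Vb P le X \<subseteq> A"
      proof
        fix v assume v: "v \<in> Vb P le X"
        then have vD: "v \<in> D" using VD X by blast
        have "v \<in> vertices P le" using v unfolding Vb_def by blast
        then obtain i where i: "f v = {i}" using vert vD by blast
        then have "i \<in> B" using union[OF X(1)] v X(2) by blast
        then obtain a where a: "a \<in> A" "i \<in> f a" unfolding B_def by blast
        have aD: "a \<in> D" using a AD by blast
        have "a \<in> vertices P le" using a A unfolding Vb_def by blast
        then obtain j where j: "f a = {j}" using vert aD by blast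
        then have "f a = f v" using a i by auto
        then show "v \<in> A" using injf aD vD a by metis
      qed
      show "A \<subseteq> Vb P le X"
      proof
        fix a assume a: "a \<in> A"
        have aD: "a \<in> D" using a AD by blast
        have "f a \<subseteq> f X" using a X unfolding B_def by blast
        then have "le a X" using ordD[OF aD X(1)] by blast
        moreover have "a \<in> vertices P le" using a A unfolding Vb_def by blast
        ultimately show "a \<in> Vb P le X" unfolding Vb_def by blast
      qed
    qed
    then show "\<exists>X\<in>P. le X J \<and> Vb P le X = A" using X D by blast
  next
    show "Vb P le J \<noteq> {}" using union[OF JD] fD[OF JD] by auto
  qed
qed

lemma le_iff: "X\<in>P \<Longrightarrow> Y\<in>P \<Longrightarrow> J\<in>P \<Longrightarrow> le X J \<Longrightarrow> le Y J \<Longrightarrow> le X Y \<longleftrightarrow> Vb P le X \<subseteq> Vb P le Y"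
  using key[of J] by blast
lemma ex_face: "J\<in>P \<Longrightarrow> A \<subseteq> Vb P le J \<Longrightarrow> A \<noteq> {} \<Longrightarrow> \<exists>X\<in>P. le X J \<and> Vb P le X = A"
  using key[of J] by blast
lemma V_ne: "X \<in> P \<Longrightarrow> Vb P le X \<noteq> {}"
  using key[of X] by blast
lemma inj_V: "X\<in>P \<Longrightarrow> Y\<in>P \<Longrightarrow> J\<in>P \<Longrightarrow> le X J \<Longrightarrow> le Y J \<Longrightarrow> Vb P le X = Vb P le Y \<Longrightarrow> X = Y"
  using le_iff[of X Y J] le_iff[of Y X J] antisymP[of X Y] by blast

end


locale spI = sp +
  fixes I
  assumes I: "I \<in> P"
begin

abbreviation "L \<equiv> link P le I"
abbreviation "V X \<equiv> Vb P le X"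

lemma L_mem: "J \<in> L \<longleftrightarrow> J \<in> P \<and> le I J \<and> J \<noteq> I" by (simp add: link_def)

lemma L_V: assumes "J \<in> L" shows "V I \<subseteq> V J" "V J - V I \<noteq> {}"
proof -
  have J: "J \<in> P" "le I J" "J \<noteq> I" using assms L_mem by auto
  show "V I \<subseteq> V J" using Vb_mono[OF I J(1) J(2)] .
  show "V J - V I \<noteq> {}"
  proof
    assume "V J - V I = {}"
    then have "V J = V I" using \<open>V I \<subseteq> V J\<close> by blast
    then have "J = I" using inj_V[of J I J] J I reflP by blast
    then show False using J by blast
  qed
qed

lemma face_L: assumes "J \<in> L" "V I \<subseteq> A" "A \<subseteq> V J" "A \<noteq> V I"
  shows "\<exists>X\<in>L. le X J \<and> V X = A"
proof -
  have J: "J \<in> P" "le I J" "J \<noteq> I" using assms L_mem by auto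
  have "A \<noteq> {}" using V_ne[OF I] assms by blast
  then obtain X where X: "X \<in> P" "le X J" "V X = A" using ex_face[OF J(1) assms(3)] by blast
  have "le I X" using le_iff[of I X J] I X J assms by blast
  moreover have "X \<noteq> I" using X assms by blast
  ultimately show ?thesis using X L_mem by blast
qed

lemma vertL: "v \<in> vertices L le \<longleftrightarrow> v \<in> L \<and> (\<exists>a. V v - V I = {a})"
proof
  assume v: "v \<in> vertices L le"
  then have vL: "v \<in> L" and min: "\<And>u. u \<in> L \<Longrightarrow> le u v \<Longrightarrow> u = v" unfolding vertices_def by auto
  obtain a where a: "a \<in> V v - V I" using L_V[OF vL] by blast
  obtain X where X: "X \<in> L" "le X v" "V X = V I \<union> {a}"
    using face_L[OF vL, of "V I \<union> {a}"] a L_V[OF vL] by blast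
  have "X = v" using min X by blast
  then have "V v - V I = {a}" using X a by blast
  then show "v \<in> L \<and> (\<exists>a. V v - V I = {a})" using vL by blast
next
  assume "v \<in> L \<and> (\<exists>a. V v - V I = {a})"
  then obtain a where vL: "v \<in> L" and a: "V v - V I = {a}" by blast
  have vP: "v \<in> P" using vL L_mem by blast
  show "v \<in> vertices L le" unfolding vertices_def
  proof (safe)
    show "v \<in> L" by fact
    fix u assume u: "u \<in> L" "le u v"
    have uP: "u \<in> P" using u L_mem by blast
    have "V u \<subseteq> V v" using Vb_mono[OF uP vP u(2)] .
    moreover have "V u - V I \<noteq> {}" using L_V[OF u(1)] by blast
    ultimately have "V u - V I \<subseteq> {a}" "V u - V I \<noteq> {}" using a by blast+
    then have "V u - V I = {a}" using subset_singletonD by blast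
    then have "V u = V v" using a L_V[OF u(1)] L_V[OF vL] by blast
    then show "u = v" using inj_V[of u v v] uP vP u reflP by blast
  qed
qed

lemma VbL_mem: "v \<in> Vb L le J \<longleftrightarrow> v \<in> vertices L le \<and> le v J" by (simp add: Vb_def)
lemma EbL_mem: "K \<in> Eb L le J \<longleftrightarrow> K \<in> edges L le \<and> le K J" by (simp add: Eb_def)
lemma edges_L: "K \<in> edges L le \<Longrightarrow> K \<in> L" by (simp add: edges_def)

lemma VbL_card: assumes K: "K \<in> L" shows "card (Vb L le K) = card (V K - V I)"
proof -
  have KP: "K \<in> P" using K L_mem by blast
  define g where "g v = the_elem (V v - V I)" for v
  have g: "v \<in> Vb L le K \<Longrightarrow> V v - V I = {g v}" for v
    unfolding g_def using VbL_mem vertL by fastforce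
  have vP: "v \<in> Vb L le K \<Longrightarrow> v \<in> P \<and> le v K \<and> v \<in> L" for v
    using VbL_mem vertL L_mem by blast
  have "bij_betw g (Vb L le K) (V K - V I)"
  proof (rule bij_betw_imageI)
    show "inj_on g (Vb L le K)"
    proof
      fix v w assume vw: "v \<in> Vb L le K" "w \<in> Vb L le K" "g v = g w"
      have vw1: "v \<in> P" "le v K" "v \<in> L" "w \<in> P" "le w K" "w \<in> L" using vP[OF vw(1)] vP[OF vw(2)] by auto
      have "V v - V I = V w - V I" using g[OF vw(1)] g[OF vw(2)] vw(3) by simp
      then have "V v = V w" using L_V(1)[OF vw1(3)] L_V(1)[OF vw1(6)] by blast
      then show "v = w" using inj_V[OF vw1(1) vw1(4) KP vw1(2) vw1(5)] by blast
    qed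
    show "g ` Vb L le K = V K - V I"
    proof
      show "g ` Vb L le K \<subseteq> V K - V I"
      proof
        fix a assume "a \<in> g ` Vb L le K"
        then obtain v where v: "v \<in> Vb L le K" "a = g v" by blast
        have "V v \<subseteq> V K" using Vb_mono[of v K] vP[OF v(1)] KP by blast
        then show "a \<in> V K - V I" using g[OF v(1)] v(2) by blast
      qed
      show "V K - V I \<subseteq> g ` Vb L le K"
      proof
        fix a assume a: "a \<in> V K - V I"
        obtain X where X: "X \<in> L" "le X K" "V X = V I \<union> {a}"
          using face_L[OF K, of "V I \<union> {a}"] a L_V(1)[OF K] by blast
        have "V X - V I = {a}" using X a by blast
        then have "X \<in> Vb L le K" using X VbL_mem vertL by blast
        moreover have "g X = a" using \<open>V X - V I = {a}\<close> g_def by simp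
        ultimately show "a \<in> g ` Vb L le K" by blast
      qed
    qed
  qed
  then show ?thesis by (rule bij_betw_same_card)
qed

lemma edgeL: "K \<in> edges L le \<longleftrightarrow> K \<in> L \<and> card (V K - V I) = 2"
  using VbL_card unfolding edges_def by auto

lemma rest_eq: assumes "K \<in> L" "e \<in> P" "le e K" "V e = V K - V I" "card (V e) = 2"
  shows "rest P le I K = e"
  unfolding rest_def
proof (rule the_equality)
  show "e \<in> edges P le \<and> le e K \<and> V e = V K - V I" using assms by (simp add: edges_def)
  have KP: "K \<in> P" using assms L_mem by blast
  fix e' assume e': "e' \<in> edges P le \<and> le e' K \<and> V e' = V K - V I"
  then show "e' = e" using inj_V[of e' e K] assms KP unfolding edges_def by auto
qed

lemma rest_prop: assumes K: "K \<in> edges L le"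
  shows "rest P le I K \<in> edges P le \<and> le (rest P le I K) K \<and> V (rest P le I K) = V K - V I"
proof -
  have KL: "K \<in> L" and c: "card (V K - V I) = 2" using K edgeL by auto
  have KP: "K \<in> P" using KL L_mem by blast
  have "V K - V I \<noteq> {}" using c by (metis card.empty zero_neq_numeral)
  then obtain X where X: "X \<in> P" "le X K" "V X = V K - V I" using ex_face[OF KP, of "V K - V I"] by blast
  have "rest P le I K = X" using rest_eq[OF KL X] c X by simp
  moreover have "X \<in> edges P le" using X c unfolding edges_def by simp
  ultimately show ?thesis using X by simp
qed

lemma uniq_v: assumes J: "J \<in> L" and e: "e \<in> P" "le e J" "\<not> le e I"
  and v: "v \<in> Vb L le J" "le e v" and w: "w \<in> Vb L le J" "le e w"
  shows "v = w"
proof -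
  have JP: "J \<in> P" "le I J" using J L_mem by auto
  have vv: "v \<in> L" "le v J" "\<exists>a. V v - V I = {a}" using v VbL_mem vertL by auto
  have ww: "w \<in> L" "le w J" "\<exists>a. V w - V I = {a}" using w VbL_mem vertL by auto
  have vP: "v \<in> P" and wP: "w \<in> P" using vv ww L_mem by auto
  have "\<not> V e \<subseteq> V I" using le_iff[of e I J] e I JP by blast
  then obtain y where y: "y \<in> V e" "y \<notin> V I" by blast
  have "V e \<subseteq> V v" "V e \<subseteq> V w" using Vb_mono e vP wP v w by auto
  then have yy: "y \<in> V v - V I" "y \<in> V w - V I" using y by auto
  obtain a b where ab: "V v - V I = {a}" "V w - V I = {b}" using vv ww by blast
  then have "V v - V I = {y}" "V w - V I = {y}" using yy by auto
  then have "V v = V w" using L_V vv ww by blast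
  then show "v = w" using inj_V[of v w J, OF vP wP JP(1) vv(2) ww(2)] by blast
qed

lemma cls: assumes J: "J \<in> L" and e: "e \<in> edges P le" "le e J" "\<not> le e I"
  and nv: "\<not> (\<exists>v\<in>Vb L le J. le e v)"
  shows "\<exists>K\<in>Eb L le J. rest P le I K = e"
proof -
  have JP: "J \<in> P" "le I J" using J L_mem by auto
  have eP: "e \<in> P" and c2: "card (V e) = 2" using e unfolding edges_def by auto
  have eJ: "V e \<subseteq> V J" using Vb_mono eP JP e by blast
  have "\<not> V e \<subseteq> V I" using le_iff[of e I J] eP I JP e by blast
  then obtain y where y: "y \<in> V e" "y \<notin> V I" by blast
  have disj: "V e \<inter> V I = {}"
  proof (rule ccontr)
    assume "V e \<inter> V I \<noteq> {}"
    then obtain x where x: "x \<in> V e" "x \<in> V I" by blast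
    have a1: "V I \<union> {y} \<noteq> V I" using y by blast
    have a2: "V I \<union> {y} \<subseteq> V J" using y eJ L_V(1)[OF J] by blast
    obtain v where v: "v \<in> L" "le v J" "V v = V I \<union> {y}"
      using face_L[OF J _ a2 a1] by blast
    have "V v - V I = {y}" using v y by blast
    then have vV: "v \<in> Vb L le J" using v VbL_mem vertL by blast
    have "V e \<subseteq> V v"
    proof
      fix z assume z: "z \<in> V e"
      show "z \<in> V v"
      proof (rule ccontr)
        assume "z \<notin> V v"
        then have d: "z \<noteq> x" "z \<noteq> y" "x \<noteq> y" using v x y by auto
        have "{x, y, z} \<subseteq> V e" using x y z by blast
        then have "card {x, y, z} \<le> card (V e)" using finV card_mono by blast
        then show False using d c2 by auto
      qed
    qed
    then have "le e v" using le_iff[of e v J] eP v JP e L_mem by blast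
    then show False using nv vV by blast
  qed
  have a1: "V I \<union> V e \<noteq> V I" using y by blast
  have a2: "V I \<union> V e \<subseteq> V J" using eJ L_V(1)[OF J] by blast
  obtain K where K: "K \<in> L" "le K J" "V K = V I \<union> V e"
    using face_L[OF J _ a2 a1] by blast
  have NK: "V K - V I = V e" using K disj by blast
  then have "K \<in> edges L le" using edgeL K c2 by simp
  then have KE: "K \<in> Eb L le J" using EbL_mem K by blast
  have KP: "K \<in> P" using K L_mem by blast
  have "le e K" using le_iff[of e K J] eP KP JP e K by blast
  then have "rest P le I K = e" using rest_eq[OF K(1) eP] NK c2 by simp
  then show ?thesis using KE by blast
qed

lemma uniq_K: assumes J: "J \<in> L" and K: "K \<in> Eb L le J" and K': "K' \<in> Eb L le J"
  and r: "rest P le I K = rest P le I K'"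
  shows "K = K'"
proof -
  have JP: "J \<in> P" using J L_mem by auto
  have KK: "K \<in> edges L le" "le K J" "K' \<in> edges L le" "le K' J" using K K' EbL_mem by auto
  have KL: "K \<in> L" "K' \<in> L" using KK edges_L by auto
  have "V K - V I = V K' - V I" using rest_prop[OF KK(1)] rest_prop[OF KK(3)] r by simp
  then have "V K = V K'" using L_V[OF KL(1)] L_V[OF KL(2)] by blast
  then show ?thesis using inj_V[of K K' J] KL L_mem KK JP by blast
qed

lemma rest_not: assumes J: "J \<in> L" and K: "K \<in> Eb L le J"
  shows "rest P le I K \<in> Eb P le J \<and> \<not> le (rest P le I K) I \<and> \<not> (\<exists>v\<in>Vb L le J. le (rest P le I K) v)"
proof -
  have JP: "J \<in> P" using J L_mem by auto
  have KK: "K \<in> edges L le" "le K J" using K EbL_mem by auto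
  have KL: "K \<in> L" using KK edges_L by auto
  have KP: "K \<in> P" using KL L_mem by auto
  have c: "card (V K - V I) = 2" using edgeL KK by blast
  define r where "r = rest P le I K"
  have r: "r \<in> edges P le" "le r K" "V r = V K - V I" using rest_prop[OF KK(1)] r_def by auto
  have rP: "r \<in> P" using r unfolding edges_def by auto
  have "le r J" using transP[OF rP KP JP] r KK by blast
  then have 1: "r \<in> Eb P le J" using r unfolding Eb_def by auto
  have 2: "\<not> le r I"
  proof
    assume "le r I"
    then have "V r \<subseteq> V I" using Vb_mono rP I by blast
    then show False using r c by (metis Diff_disjoint Int_absorb1 card.empty zero_neq_numeral)
  qed
  have 3: "\<not> (\<exists>v\<in>Vb L le J. le r v)"
  proof
    assume "\<exists>v\<in>Vb L le J. le r v"
    then obtain v where v: "v \<in> Vb L le J" "le r v" by blast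
    have vv: "v \<in> L" "\<exists>a. V v - V I = {a}" using v VbL_mem vertL by auto
    then obtain a where a: "V v - V I = {a}" by blast
    have vP: "v \<in> P" using vv L_mem by auto
    have "V r \<subseteq> V v" using Vb_mono rP vP v by blast
    then have "V K - V I \<subseteq> {a}" using r a by blast
    then have "card (V K - V I) \<le> card {a}" by (rule card_mono[rotated]) simp
    then show False using c by simp
  qed
  show ?thesis using 1 2 3 r_def by blast
qed


lemma AvE: assumes "J \<in> L" "v \<in> Vb L le J" shows "Eb P le v - Eb P le I \<subseteq> Eb P le J"
proof
  fix e assume e: "e \<in> Eb P le v - Eb P le I"
  have v: "v \<in> P" "le v J" using assms VbL_mem vertL L_mem by auto
  have J: "J \<in> P" using assms L_mem by auto
  have ee: "e \<in> edges P le" "le e v" using e unfolding Eb_def by auto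
  then have "e \<in> P" unfolding edges_def by auto
  then show "e \<in> Eb P le J" using transP[of e v J] v J ee unfolding Eb_def by auto
qed

lemma VbL_mono: assumes "J \<in> L" "J' \<in> L" "le J J'" "v \<in> Vb L le J" shows "v \<in> Vb L le J'"
proof -
  have v: "v \<in> vertices L le" "le v J" using assms(4) VbL_mem by auto
  have "v \<in> P" using v vertL L_mem by auto
  then have "le v J'" using transP[of v J J'] assms v L_mem by auto
  then show ?thesis using v VbL_mem by auto
qed

lemma EbL_mono: assumes "J \<in> L" "J' \<in> L" "le J J'" "K \<in> Eb L le J" shows "K \<in> Eb L le J'"
proof -
  have v: "K \<in> edges L le" "le K J" using assms(4) EbL_mem by auto
  have "K \<in> P" using v edges_L L_mem by auto
  then have "le K J'" using transP[of K J J'] assms v L_mem by auto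
  then show ?thesis using v EbL_mem by auto
qed

lemma main:
  assumes cI1: "\<forall>e \<in> Eb P le I. 1 \<le> cI e \<and> cI e \<le> \<mu> e"
    and cI0: "\<forall>e. e \<notin> Eb P le I \<longrightarrow> cI e = 0"
  shows "poset_iso
           (link (inflation P le \<mu>) (inflation_le P le) (I, cI)) (inflation_le P le)
           (inflation2 (link P le I) le
              (\<lambda>J. \<mu> (rest P le I J))
              (\<lambda>J. \<Prod>e \<in> Eb P le J - Eb P le I. \<mu> e))
           (inflation2_le (link P le I) le)"
proof -
  define A where "A v = Eb P le v - Eb P le I" for v
  define \<nu> where "\<nu> v = (\<Prod>e\<in>A v. \<mu> e)" for v
  define F where "F v = {f. (\<forall>e\<in>A v. 1 \<le> f e \<and> f e \<le> \<mu> e) \<and> (\<forall>e. e \<notin> A v \<longrightarrow> f e = (0::nat))}" for v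
  have finA: "finite (A v)" for v
  proof -
    have "A v \<subseteq> P" unfolding A_def Eb_def edges_def by auto
    then show ?thesis using fin finite_subset by blast
  qed
  have exg: "\<exists>g. bij_betw g (F v) {1..\<nu> v}" for v
  proof -
    have "finite (F v) \<and> card (F v) = \<nu> v" using card_F[OF finA[of v], of \<mu>] unfolding F_def \<nu>_def by simp
    then show ?thesis using bij_betw_iff_card[of "F v" "{1..\<nu> v}"] by simp
  qed
  define enc where "enc v = (SOME g. bij_betw g (F v) {1..\<nu> v})" for v
  have enc: "bij_betw (enc v) (F v) {1..\<nu> v}" for v
    unfolding enc_def using someI_ex[OF exg[of v]] .
  define dec where "dec v = the_inv_into (F v) (enc v)" for v
  have dec: "n \<in> {1..\<nu> v} \<Longrightarrow> dec v n \<in> F v \<and> enc v (dec v n) = n" for n v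
    unfolding dec_def using enc[of v] bij_betw_def the_inv_into_into f_the_inv_into_f
    by (metis order_refl)
  have enc_inj: "f \<in> F v \<Longrightarrow> g \<in> F v \<Longrightarrow> enc v f = enc v g \<Longrightarrow> f = g" for f g v
    using enc[of v] unfolding bij_betw_def inj_on_def by blast
  have enc_into: "f \<in> F v \<Longrightarrow> enc v f \<in> {1..\<nu> v}" for f v
    using enc[of v] bij_betwE by blast
  define LI where "LI = link (inflation P le \<mu>) (inflation_le P le) (I, cI)"
  define M where "M = inflation2 L le (\<lambda>J. \<mu> (rest P le I J)) \<nu>"
  have nu_eq: "(\<lambda>J. \<Prod>e \<in> Eb P le J - Eb P le I. \<mu> e) = \<nu>" by (simp add: \<nu>_def A_def fun_eq_iff)
  have LI_mem: "(J, c) \<in> LI \<longleftrightarrow> J \<in> L \<and> (\<forall>e\<in>Eb P le J. 1 \<le> c e \<and> c e \<le> \<mu> e) \<and>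
      (\<forall>e. e \<notin> Eb P le J \<longrightarrow> c e = 0) \<and> (\<forall>e\<in>Eb P le I. c e = cI e)" for J c
  proof
    assume "(J,c) \<in> LI"
    then have h: "J \<in> P" "\<forall>e\<in>Eb P le J. 1 \<le> c e \<and> c e \<le> \<mu> e" "\<forall>e. e \<notin> Eb P le J \<longrightarrow> c e = 0"
      "le I J" "cI = (\<lambda>e. if e \<in> Eb P le I then c e else 0)" "(J,c) \<noteq> (I,cI)"
      unfolding LI_def link_def inflation_def inflation_le_def by auto
    have "J \<noteq> I"
    proof
      assume "J = I"
      then have "c = cI" using h(3,5) by (auto simp: fun_eq_iff)
      then show False using h(6) \<open>J = I\<close> by simp
    qed
    then show "J \<in> L \<and> (\<forall>e\<in>Eb P le J. 1 \<le> c e \<and> c e \<le> \<mu> e) \<and>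
      (\<forall>e. e \<notin> Eb P le J \<longrightarrow> c e = 0) \<and> (\<forall>e\<in>Eb P le I. c e = cI e)"
      using h L_mem by auto
  next
    assume h: "J \<in> L \<and> (\<forall>e\<in>Eb P le J. 1 \<le> c e \<and> c e \<le> \<mu> e) \<and>
      (\<forall>e. e \<notin> Eb P le J \<longrightarrow> c e = 0) \<and> (\<forall>e\<in>Eb P le I. c e = cI e)"
    have "cI = (\<lambda>e. if e \<in> Eb P le I then c e else 0)" using h cI0 by (auto simp: fun_eq_iff)
    moreover have "I \<in> P" using I .
    ultimately show "(J,c) \<in> LI" using h cI1 cI0 L_mem
      unfolding LI_def link_def inflation_def inflation_le_def by auto
  qed
  have M_mem: "(J, d, c) \<in> M \<longleftrightarrow> J \<in> L \<and> (\<forall>v\<in>Vb L le J. 1 \<le> d v \<and> d v \<le> \<nu> v) \<and>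
      (\<forall>v. v \<notin> Vb L le J \<longrightarrow> d v = 0) \<and> (\<forall>K\<in>Eb L le J. 1 \<le> c K \<and> c K \<le> \<mu> (rest P le I K)) \<and>
      (\<forall>K. K \<notin> Eb L le J \<longrightarrow> c K = 0)" for J d c
    unfolding M_def inflation2_def by simp
  define \<Phi> where "\<Phi> = (\<lambda>(J, c). (J,
     \<lambda>v. if v \<in> Vb L le J then enc v (\<lambda>e. if e \<in> A v then c e else 0) else 0,
     \<lambda>K. if K \<in> Eb L le J then c (rest P le I K) else (0::nat)))"
  have \<Phi>_eq: "\<Phi> (J, c) = (J, \<lambda>v. if v \<in> Vb L le J then enc v (\<lambda>e. if e \<in> A v then c e else 0) else 0,
     \<lambda>K. if K \<in> Eb L le J then c (rest P le I K) else 0)" for J c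
    unfolding \<Phi>_def prod.case by (simp only: prod.inject)
  have restrF: "(\<lambda>e. if e \<in> A v then c e else 0) \<in> F v"
    if "(J, c) \<in> LI" "v \<in> Vb L le J" for J c v
  proof -
    have h: "J \<in> L" "\<forall>e\<in>Eb P le J. 1 \<le> c e \<and> c e \<le> \<mu> e" using that LI_mem by auto
    have "A v \<subseteq> Eb P le J" using AvE[OF h(1) that(2)] A_def by simp
    then show ?thesis using h unfolding F_def by auto
  qed
  have into: "\<Phi> (J, c) \<in> M" if "(J, c) \<in> LI" for J c
  proof -
    have h: "J \<in> L" "\<forall>e\<in>Eb P le J. 1 \<le> c e \<and> c e \<le> \<mu> e" using that LI_mem by auto
    have 1: "\<forall>v\<in>Vb L le J. 1 \<le> enc v (\<lambda>e. if e \<in> A v then c e else 0) \<and>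
        enc v (\<lambda>e. if e \<in> A v then c e else 0) \<le> \<nu> v"
      using enc_into[OF restrF[OF that]] by auto
    have 2: "\<forall>K\<in>Eb L le J. 1 \<le> c (rest P le I K) \<and> c (rest P le I K) \<le> \<mu> (rest P le I K)"
      using rest_not[OF h(1)] h(2) by blast
    show ?thesis unfolding \<Phi>_eq M_mem using h 1 2 by auto
  qed

  have ord: "inflation_le P le (J, c) (J', c') \<longleftrightarrow> inflation2_le L le (\<Phi> (J, c)) (\<Phi> (J', c'))"
    if x: "(J, c) \<in> LI" and y: "(J', c') \<in> LI" for J c J' c'
  proof -
    have hx: "J \<in> L" "\<forall>e\<in>Eb P le J. 1 \<le> c e \<and> c e \<le> \<mu> e" "\<forall>e. e \<notin> Eb P le J \<longrightarrow> c e = 0"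
        "\<forall>e\<in>Eb P le I. c e = cI e" using x LI_mem by auto
    have hy: "J' \<in> L" "\<forall>e\<in>Eb P le J'. 1 \<le> c' e \<and> c' e \<le> \<mu> e" "\<forall>e. e \<notin> Eb P le J' \<longrightarrow> c' e = 0"
        "\<forall>e\<in>Eb P le I. c' e = cI e" using y LI_mem by auto
    have L1: "inflation_le P le (J, c) (J', c') \<longleftrightarrow> le J J' \<and> c = (\<lambda>e. if e \<in> Eb P le J then c' e else 0)"
      unfolding inflation_le_def fst_conv snd_conv by (rule refl)
    have L2: "inflation2_le L le (\<Phi> (J, c)) (\<Phi> (J', c')) \<longleftrightarrow> le J J' \<and>
       (\<lambda>v. if v \<in> Vb L le J then enc v (\<lambda>e. if e \<in> A v then c e else 0) else 0) =
       (\<lambda>v. if v \<in> Vb L le J then (if v \<in> Vb L le J' then enc v (\<lambda>e. if e \<in> A v then c' e else 0) else 0) else 0) \<and>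
       (\<lambda>K. if K \<in> Eb L le J then c (rest P le I K) else 0) =
       (\<lambda>K. if K \<in> Eb L le J then (if K \<in> Eb L le J' then c' (rest P le I K) else 0) else 0)"
      unfolding \<Phi>_eq inflation2_le_def prod.case by (simp only: )
    show ?thesis
    proof (cases "le J J'")
      case False
      then show ?thesis using L1 L2 by simp
    next
      case True
      have VV: "v \<in> Vb L le J \<Longrightarrow> v \<in> Vb L le J'" for v using VbL_mono[OF hx(1) hy(1) True] by blast
      have EE: "K \<in> Eb L le J \<Longrightarrow> K \<in> Eb L le J'" for K using EbL_mono[OF hx(1) hy(1) True] by blast
      show ?thesis
      proof
        assume "inflation_le P le (J, c) (J', c')"
        then have cc: "c = (\<lambda>e. if e \<in> Eb P le J then c' e else 0)" using L1 by simp
        have 1: "(\<lambda>e. if e \<in> A v then c e else 0) = (\<lambda>e. if e \<in> A v then c' e else 0)"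
          if "v \<in> Vb L le J" for v
          using AvE[OF hx(1) that] unfolding A_def cc by (auto simp: fun_eq_iff)
        have 2: "c (rest P le I K) = c' (rest P le I K)" if "K \<in> Eb L le J" for K
          using rest_not[OF hx(1) that] cc by simp
        show "inflation2_le L le (\<Phi> (J, c)) (\<Phi> (J', c'))"
          unfolding L2 using True 1 2 VV EE by (auto simp: fun_eq_iff)
      next
        assume "inflation2_le L le (\<Phi> (J, c)) (\<Phi> (J', c'))"
        then have a1: "\<forall>x. (if x \<in> Vb L le J then enc x (\<lambda>e. if e \<in> A x then c e else 0) else 0) =
              (if x \<in> Vb L le J then if x \<in> Vb L le J' then enc x (\<lambda>e. if e \<in> A x then c' e else 0) else 0 else 0)"
          and a2: "\<forall>x. (if x \<in> Eb L le J then c (rest P le I x) else 0) =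
              (if x \<in> Eb L le J then if x \<in> Eb L le J' then c' (rest P le I x) else 0 else 0)"
          unfolding L2 fun_eq_iff by blast+
        have dd: "enc v (\<lambda>e. if e \<in> A v then c e else 0) = enc v (\<lambda>e. if e \<in> A v then c' e else 0)"
          if v: "v \<in> Vb L le J" for v
          using a1[rule_format, of v] v VV[OF v] by simp
        have kk: "c (rest P le I K) = c' (rest P le I K)" if K: "K \<in> Eb L le J" for K
          using a2[rule_format, of K] K EE[OF K] by simp
        have "c e = (if e \<in> Eb P le J then c' e else 0)" for e
        proof (cases "e \<in> Eb P le J")
          case False then show ?thesis using hx(3) by simp
        next
          case eJ: True
          then have ee: "e \<in> edges P le" "le e J" unfolding Eb_def by auto
          show ?thesis
          proof (cases "le e I")
            case True
            then have "e \<in> Eb P le I" using ee unfolding Eb_def by auto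
            then show ?thesis using hx(4) hy(4) eJ by simp
          next
            case nI: False
            show ?thesis
            proof (cases "\<exists>v\<in>Vb L le J. le e v")
              case True
              then obtain v where v: "v \<in> Vb L le J" "le e v" by blast
              have eA: "e \<in> A v" using ee v nI unfolding A_def Eb_def by auto
              have "(\<lambda>e. if e \<in> A v then c e else 0) = (\<lambda>e. if e \<in> A v then c' e else 0)"
                using enc_inj[OF restrF[OF x v(1)] restrF[OF y VV[OF v(1)]] dd[OF v(1)]] .
              then have "c e = c' e" using eA by (metis (mono_tags))
              then show ?thesis using eJ by simp
            next
              case False
              then obtain K where K: "K \<in> Eb L le J" "rest P le I K = e" using cls[OF hx(1) ee nI] by blast
              then show ?thesis using kk[OF K(1)] eJ by simp
            qed
          qed
        qed
        then show "inflation_le P le (J, c) (J', c')" using L1 True by (simp add: fun_eq_iff)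
      qed
    qed
  qed
  have M_refl: "inflation2_le L le z z" if "z \<in> M" for z
  proof -
    obtain J d c where z: "z = (J, d, c)" by (cases z) auto
    show ?thesis using that unfolding z M_mem inflation2_le_def using reflP L_mem by (auto simp: fun_eq_iff)
  qed
  have inj: "inj_on \<Phi> LI"
  proof
    fix x y assume x: "x \<in> LI" and y: "y \<in> LI" and e: "\<Phi> x = \<Phi> y"
    obtain J c where xx: "x = (J, c)" by (cases x) auto
    obtain J' c' where yy: "y = (J', c')" by (cases y) auto
    have "inflation_le P le x y" "inflation_le P le y x"
      using ord[of J c J' c'] ord[of J' c' J c] M_refl into x y e unfolding xx yy by metis+
    then have "le J J'" "le J' J" and cc: "c = (\<lambda>e. if e \<in> Eb P le J then c' e else 0)"
      unfolding xx yy inflation_le_def fst_conv snd_conv by auto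
    moreover have "J \<in> P" "J' \<in> P" using x y LI_mem L_mem unfolding xx yy by auto
    ultimately have JJ: "J = J'" using antisymP by blast
    have "c = c'" using cc y LI_mem unfolding yy JJ by (auto simp: fun_eq_iff)
    then show "x = y" using xx yy JJ by simp
  qed
  have surj: "\<exists>x\<in>LI. \<Phi> x = z" if z: "z \<in> M" for z
  proof -
    obtain J d ct where zz: "z = (J, d, ct)" by (cases z) auto
    have h: "J \<in> L" "\<forall>v\<in>Vb L le J. 1 \<le> d v \<and> d v \<le> \<nu> v" "\<forall>v. v \<notin> Vb L le J \<longrightarrow> d v = 0"
      "\<forall>K\<in>Eb L le J. 1 \<le> ct K \<and> ct K \<le> \<mu> (rest P le I K)" "\<forall>K. K \<notin> Eb L le J \<longrightarrow> ct K = 0"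
      using z unfolding zz M_mem by auto
    have JP: "J \<in> P" "le I J" using h(1) L_mem by auto
    define vs where "vs e = (SOME v. v \<in> Vb L le J \<and> le e v)" for e
    define Ks where "Ks e = (SOME K. K \<in> Eb L le J \<and> rest P le I K = e)" for e
    define c where "c e = (if e \<in> Eb P le J then (if le e I then cI e
       else if (\<exists>v\<in>Vb L le J. le e v) then dec (vs e) (d (vs e)) e
       else ct (Ks e)) else 0)" for e
    have dv: "v \<in> Vb L le J \<Longrightarrow> dec v (d v) \<in> F v \<and> enc v (dec v (d v)) = d v" for v
      using dec h(2) by auto
    have vs: "v \<in> Vb L le J \<Longrightarrow> le e v \<Longrightarrow> vs e \<in> Vb L le J \<and> le e (vs e)" for e v
      unfolding vs_def by (rule someI2[of _ v]) auto
    have vs2: "e \<in> edges P le \<Longrightarrow> le e J \<Longrightarrow> \<not> le e I \<Longrightarrow> v \<in> Vb L le J \<Longrightarrow> le e v \<Longrightarrow> vs e = v" for e v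
      using vs[of v e] uniq_v[OF h(1), of e "vs e" v] unfolding edges_def by blast
    have Ks: "K \<in> Eb L le J \<Longrightarrow> Ks (rest P le I K) = K" for K
      unfolding Ks_def by (rule some_equality) (auto intro: uniq_K[OF h(1)])
    have cval: "1 \<le> c e \<and> c e \<le> \<mu> e" if eJ: "e \<in> Eb P le J" for e
    proof -
      have ee: "e \<in> edges P le" "le e J" using eJ unfolding Eb_def by auto
      show ?thesis
      proof (cases "le e I")
        case True
        then have "e \<in> Eb P le I" using ee unfolding Eb_def by auto
        then show ?thesis using cI1 True eJ unfolding c_def by simp
      next
        case nI: False
        show ?thesis
        proof (cases "\<exists>v\<in>Vb L le J. le e v")
          case True
          then obtain v where v: "v \<in> Vb L le J" "le e v" by blast
          have w: "vs e \<in> Vb L le J" "le e (vs e)" using vs[OF v] by auto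
          have eA: "e \<in> A (vs e)" using ee w nI unfolding A_def Eb_def by auto
          have "dec (vs e) (d (vs e)) \<in> F (vs e)" using dv[OF w(1)] by blast
          then have "1 \<le> dec (vs e) (d (vs e)) e \<and> dec (vs e) (d (vs e)) e \<le> \<mu> e"
            using eA unfolding F_def by blast
          then show ?thesis using True nI eJ unfolding c_def by simp
        next
          case False
          then obtain K where K: "K \<in> Eb L le J" "rest P le I K = e" using cls[OF h(1) ee nI] by blast
          have "Ks e = K" using Ks[OF K(1)] K(2) by simp
          then show ?thesis using h(4) K False nI eJ unfolding c_def by auto
        qed
      qed
    qed
    have cI_agree: "\<forall>e\<in>Eb P le I. c e = cI e"
    proof
      fix e assume e: "e \<in> Eb P le I"
      then have ee: "e \<in> edges P le" "le e I" unfolding Eb_def by auto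
      then have "e \<in> P" unfolding edges_def by auto
      then have "le e J" using transP[of e I J] I JP ee by blast
      then have "e \<in> Eb P le J" using ee unfolding Eb_def by auto
      then show "c e = cI e" using ee unfolding c_def by simp
    qed
    have xLI: "(J, c) \<in> LI" unfolding LI_mem using h(1) cval cI_agree by (auto simp: c_def)
    have d_eq: "(\<lambda>v. if v \<in> Vb L le J then enc v (\<lambda>e. if e \<in> A v then c e else 0) else 0) = d"
    proof
      fix v show "(if v \<in> Vb L le J then enc v (\<lambda>e. if e \<in> A v then c e else 0) else 0) = d v"
      proof (cases "v \<in> Vb L le J")
        case False then show ?thesis using h(3) by simp
      next
        case v: True
        have "(\<lambda>e. if e \<in> A v then c e else 0) = dec v (d v)"
        proof
          fix e show "(if e \<in> A v then c e else 0) = dec v (d v) e"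
          proof (cases "e \<in> A v")
            case False then show ?thesis using dv[OF v] unfolding F_def by auto
          next
            case True
            have eJ: "e \<in> Eb P le J" using AvE[OF h(1) v] True unfolding A_def by blast
            have ee: "e \<in> edges P le" "le e v" "\<not> le e I" using True unfolding A_def Eb_def by auto
            have "vs e = v" using vs2[OF ee(1) _ ee(3) v ee(2)] eJ unfolding Eb_def by auto
            then show ?thesis using True eJ ee v unfolding c_def by auto
          qed
        qed
        then show ?thesis using dv[OF v] v by simp
      qed
    qed
    have ct_eq: "(\<lambda>K. if K \<in> Eb L le J then c (rest P le I K) else 0) = ct"
    proof
      fix K show "(if K \<in> Eb L le J then c (rest P le I K) else 0) = ct K"
      proof (cases "K \<in> Eb L le J")
        case False then show ?thesis using h(5) by simp
      next
        case True
        have r: "rest P le I K \<in> Eb P le J" "\<not> le (rest P le I K) I" "\<not> (\<exists>v\<in>Vb L le J. le (rest P le I K) v)"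
          using rest_not[OF h(1) True] by auto
        then show ?thesis using Ks[OF True] True unfolding c_def by simp
      qed
    qed
    have "\<Phi> (J, c) = z" unfolding \<Phi>_eq zz d_eq ct_eq by simp
    then show ?thesis using xLI by blast
  qed
  have bij: "bij_betw \<Phi> LI M"
  proof (rule bij_betw_imageI[OF inj])
    show "\<Phi> ` LI = M"
    proof
      show "\<Phi> ` LI \<subseteq> M" using into by auto
      show "M \<subseteq> \<Phi> ` LI" using surj by blast
    qed
  qed
  have "poset_iso LI (inflation_le P le) M (inflation2_le L le)"
    unfolding poset_iso_def
  proof (intro exI conjI ballI)
    show "bij_betw \<Phi> LI M" by (rule bij)
    fix x y assume "x \<in> LI" "y \<in> LI"
    then show "inflation_le P le x y \<longleftrightarrow> inflation2_le L le (\<Phi> x) (\<Phi> y)"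
      using ord by (cases x, cases y) auto
  qed
  then show ?thesis unfolding LI_def M_def nu_eq .
qed

end

theorem lemma5p6:
  fixes P :: "'a set" and le :: "'a \<Rightarrow> 'a \<Rightarrow> bool"
    and \<mu> :: "'a \<Rightarrow> nat" and I :: 'a and cI :: "'a \<Rightarrow> nat"
  assumes "simplicial_poset P le"
    and "\<forall>e \<in> edges P le. 0 < \<mu> e"
    and "I \<in> P"
    and "\<forall>e \<in> Eb P le I. 1 \<le> cI e \<and> cI e \<le> \<mu> e"
    and "\<forall>e. e \<notin> Eb P le I \<longrightarrow> cI e = 0"
  shows "poset_iso
           (link (inflation P le \<mu>) (inflation_le P le) (I, cI)) (inflation_le P le)
           (inflation2 (link P le I) le
              (\<lambda>J. \<mu> (rest P le I J))
              (\<lambda>J. \<Prod>e \<in> Eb P le J - Eb P le I. \<mu> e))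
           (inflation2_le (link P le I) le)"
proof -
  interpret spI P le I using assms(1,3) by (unfold_locales) auto
  show ?thesis using main assms(4,5) by blast
qed

end
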